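(* Let $n\ge2$, $\nu\in\mathbb{C}$, $k\in\mathbb{C}$ with $nk\notin\{-1,-2,\dots\}$. The function \[ \varphi(z)=(y_1\cdots y_{n-1})^{-\nu/n}F_D\bigl(-\nu,k,\dots,k,nk;\,1-y_1,\dots,1-y_{n-1}\bigr),\qquad y_i=z_i/z_n\ (1\le i\le n-1), \] (defined near $z=(1,\dots,1)$ in $\mathbb{R}^n_{>0}$) is invariant under the action of $S_n$ permuting the coordinates $z_1,\dots,z_n$.
   Context: Lauricella's $F_D$ in $m=n-1$ variables: for $\gamma\notin\{0,-1,-2,\dots\}$, $F_D(\alpha,\beta_1,\dots,\beta_m,\gamma;x)$ is the analytic continuation of $\sum_{m_1,\dots,m_m\ge0}\frac{(\alpha)_{|m|}(\beta_1)_{m_1}\cdots(\beta_m)_{m_m}}{(\gamma)_{|m|}m_1!\cdots m_m!}x_1^{m_1}\cdots x_m^{m_m}$, $|m|=m_1+\dots+m_m$, $(a)_0=1$, $(a)_j=a(a+1)\cdots(a+j-1)$. Here all $\beta_i$ equal $k$. *)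

theory Defs
  imports "HOL-Analysis.Analysis"
begin

text \<open>Near x = 0 (polydisc |x_i| < 1) this series converges absolutely and is the
  function itself; only this region is used below.\<close>
definition lauricella_FD ::
  "nat \<Rightarrow> complex \<Rightarrow> (nat \<Rightarrow> complex) \<Rightarrow> complex \<Rightarrow> (nat \<Rightarrow> complex) \<Rightarrow> complex" where
  "lauricella_FD d \<alpha> \<beta> \<gamma> x =
     (\<Sum>\<^sub>\<infinity> m \<in> {m :: nat \<Rightarrow> nat. \<forall>i\<ge>d. m i = 0}.
        pochhammer \<alpha> (\<Sum>i<d. m i) * (\<Prod>i<d. pochhammer (\<beta> i) (m i))
        / (pochhammer \<gamma> (\<Sum>i<d. m i) * (\<Prod>i<d. fact (m i)))
        * (\<Prod>i<d. x i ^ m i))"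

text \<open>The function phi on z = (z_0,...,z_{n-1}) (0-based; z_{n-1} plays the role of z_n),
  with y_i = z_i / z_{n-1}.\<close>
definition phi :: "nat \<Rightarrow> complex \<Rightarrow> complex \<Rightarrow> (nat \<Rightarrow> real) \<Rightarrow> complex" where
  "phi n \<nu> k z =
     (complex_of_real (\<Prod>i<n-1. z i / z (n-1))) powr (- \<nu> / of_nat n)
     * lauricella_FD (n-1) (- \<nu>) (\<lambda>_. k) (of_nat n * k)
         (\<lambda>i. complex_of_real (1 - z i / z (n-1)))"

end

theory Submission imports Defs "HOL-Complex_Analysis.Complex_Analysis" begin


definition SS :: "nat \<Rightarrow> (nat \<Rightarrow> nat) set" where "SS d = {m. \<forall>i\<ge>d. m i = 0}"

lemma has_sum_sum_fin:
  fixes f :: "'i \<Rightarrow> 'a \<Rightarrow> 'b::topological_comm_monoid_add"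
  assumes "finite I" "\<And>i. i \<in> I \<Longrightarrow> (f i has_sum s i) A"
  shows "((\<lambda>x. \<Sum>i\<in>I. f i x) has_sum (\<Sum>i\<in>I. s i)) A"
  using assms by (induction I rule: finite_induct) (auto intro: has_sum_add)

lemma has_sum_diff:
  fixes f g :: "'a \<Rightarrow> 'b::topological_ab_group_add"
  assumes "(f has_sum a) A" "(g has_sum b) A"
  shows "((\<lambda>x. f x - g x) has_sum (a - b)) A"
proof -
  have "((\<lambda>x. - g x) has_sum (- b)) A" using has_sum_uminus[where f=g and a="-b" and A=A] assms(2) by simp
  from has_sum_add[OF assms(1) this] show ?thesis by simp
qed

lemma geo_bound:
  fixes f :: "nat \<Rightarrow> real"
  assumes nn: "\<And>N. f N \<ge> 0" and l: "l > 0" and ev: "\<And>N. N \<ge> Nz \<Longrightarrow> f (Suc N) \<le> l * f N"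
  shows "\<exists>C\<ge>0. \<forall>N. f N \<le> C * l ^ N"
proof -
  define C where "C = (\<Sum>j\<le>Nz. f j / l ^ j)"
  have C0: "C \<ge> 0" unfolding C_def using nn l by (intro sum_nonneg) auto
  have small: "f j / l^j \<le> C" if "j \<le> Nz" for j
    unfolding C_def using that nn l by (intro member_le_sum) auto
  have big: "f (Nz + d) \<le> f Nz * l ^ d" for d
  proof (induction d)
    case 0 then show ?case by simp
  next
    case (Suc d)
    have "f (Nz + Suc d) = f (Suc (Nz + d))" by simp
    also have "\<dots> \<le> l * f (Nz + d)" by (rule ev) simp
    also have "\<dots> \<le> l * (f Nz * l ^ d)" using Suc l by (intro mult_left_mono) auto
    finally show ?case by (simp add: algebra_simps)
  qed
  have "f N \<le> C * l ^ N" for N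
  proof (cases "N \<le> Nz")
    case True
    then have "f N / l^N \<le> C" by (rule small)
    then show ?thesis using l by (simp add: divide_le_eq)
  next
    case False
    then obtain d where d: "N = Nz + d" by (metis le_add_diff_inverse nat_le_linear)
    have "f N \<le> f Nz * l ^ d" using big d by simp
    also have "f Nz \<le> C * l ^ Nz" using small[of Nz] l by (simp add: divide_le_eq)
    then have "f Nz * l ^ d \<le> C * l ^ Nz * l ^ d" using l by (intro mult_right_mono) auto
    finally show ?thesis by (simp add: d power_add mult.assoc)
  qed
  then show ?thesis using C0 by blast
qed

lemma ratio_ev:
  fixes a b :: complex and l :: real
  assumes "l > 1"
  shows "\<exists>Nz. \<forall>N\<ge>Nz. norm (a + of_nat N) \<le> l * norm (b + of_nat N)"
proof -
  define Nz where "Nz = nat \<lceil>(norm a + l * norm b) / (l - 1)\<rceil>"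
  have "norm (a + of_nat N) \<le> l * norm (b + of_nat N)" if "N \<ge> Nz" for N
  proof -
    have "real N \<ge> (norm a + l * norm b) / (l - 1)"
      using that unfolding Nz_def by linarith
    then have h: "(l - 1) * real N \<ge> norm a + l * norm b" using assms by (simp add: field_simps)
    then have h': "l * real N - real N \<ge> norm a + l * norm b" by (simp add: algebra_simps)
    have A: "norm (a + of_nat N) \<le> norm a + real N" using norm_triangle_ineq[of a "of_nat N"] by simp
    have B: "real N - norm b \<le> norm (b + of_nat N)"
      using norm_triangle_ineq[of "b + of_nat N" "-b"] by simp
    have "l * (real N - norm b) \<le> l * norm (b + of_nat N)"
      using B assms by (intro mult_left_mono) auto
    then have "l * real N - l * norm b \<le> l * norm (b + of_nat N)" by (simp add: algebra_simps)
    then show ?thesis using A h' by linarith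
  qed
  then show ?thesis by blast
qed

lemma geom_multi:
  fixes q :: real
  assumes q: "0 \<le> q" "q < 1"
  shows "(\<lambda>m. q ^ (\<Sum>i<n. m i)) summable_on SS n"
proof (rule nonneg_bdd_above_summable_on)
  show "\<And>m. m \<in> SS n \<Longrightarrow> 0 \<le> q ^ (\<Sum>i<n. m i)" using q by simp
  have "sum (\<lambda>m. q ^ (\<Sum>i<n. m i)) F \<le> (1/(1-q))^n" if F: "finite F" "F \<subseteq> SS n" for F
  proof -
    define M where "M = (\<Sum>m\<in>F. \<Sum>i<n. m i)"
    have mle: "m i \<le> M" if "m \<in> F" "i < n" for m i
    proof -
      have "m i \<le> (\<Sum>i<n. m i)" using that by (intro member_le_sum) auto
      also have "\<dots> \<le> M" unfolding M_def using that F by (intro member_le_sum) auto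
      finally show ?thesis .
    qed
    define R where "R m = restrict m {..<n}" for m :: "nat \<Rightarrow> nat"
    have inj: "inj_on R (SS n)"
    proof
      fix x y assume x: "x \<in> SS n" and y: "y \<in> SS n" and e: "R x = R y"
      show "x = y"
      proof
        fix i
        show "x i = y i"
        proof (cases "i < n")
          case True then show ?thesis using fun_cong[OF e, of i] by (simp add: R_def)
        next
          case False then show ?thesis using x y by (simp add: SS_def)
        qed
      qed
    qed
    have img: "R ` F \<subseteq> PiE {..<n} (\<lambda>_. {..M})"
      using mle unfolding R_def by (intro image_subsetI) (auto simp: restrict_PiE_iff simp del: restrict_apply)
    have "sum (\<lambda>m. q ^ (\<Sum>i<n. m i)) F = sum (\<lambda>g. \<Prod>i<n. q ^ g i) (R ` F)"
    proof -
      have "sum (\<lambda>g. \<Prod>i<n. q ^ g i) (R ` F) = sum ((\<lambda>g. \<Prod>i<n. q ^ g i) \<circ> R) F"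
        by (rule sum.reindex) (use inj F in \<open>blast intro: inj_on_subset\<close>)
      also have "\<dots> = sum (\<lambda>m. q ^ (\<Sum>i<n. m i)) F"
      proof (rule sum.cong)
        fix m show "((\<lambda>g. \<Prod>i<n. q ^ g i) \<circ> R) m = q ^ (\<Sum>i<n. m i)"
          unfolding power_sum o_def by (rule prod.cong) (auto simp: R_def)
      qed simp
      finally show ?thesis by simp
    qed
    also have "\<dots> \<le> sum (\<lambda>g. \<Prod>i<n. q ^ g i) (PiE {..<n} (\<lambda>_. {..M}))"
      using img q by (intro sum_mono2) (auto intro!: finite_PiE prod_nonneg)
    also have "\<dots> = (\<Prod>i<n. \<Sum>j\<le>M. q ^ j)"
      by (subst prod_sum_PiE) auto
    also have "\<dots> \<le> (\<Prod>i<n. 1/(1-q))"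
    proof (intro prod_mono conjI)
      fix i
      show "0 \<le> (\<Sum>j\<le>M. q ^ j)" using q by (intro sum_nonneg) auto
      have "(\<Sum>j\<le>M. q ^ j) = (\<Sum>j<Suc M. q ^ j)" by (simp add: lessThan_Suc_atMost)
      also have "\<dots> = (1 - q ^ Suc M) / (1 - q)" using q by (subst sum_gp_strict) auto
      also have "\<dots> \<le> 1 / (1 - q)" using q by (intro divide_right_mono) auto
      finally show "(\<Sum>j\<le>M. q ^ j) \<le> 1/(1-q)" .
    qed
    finally show ?thesis by simp
  qed
  then show "bdd_above (sum (\<lambda>m. q ^ (\<Sum>i<n. m i)) ` {F. F \<subseteq> SS n \<and> finite F})"
    by (intro bdd_aboveI2[where M="(1/(1-q))^n"]) auto
qed



definition aa :: "nat \<Rightarrow> complex \<Rightarrow> complex \<Rightarrow> (nat\<Rightarrow>nat) \<Rightarrow> complex" where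
 "aa n \<nu> k m = pochhammer (- \<nu>) (\<Sum>i<n. m i) * (\<Prod>i<n. pochhammer k (m i))
    / (pochhammer (of_nat n * k) (\<Sum>i<n. m i) * (\<Prod>i<n. fact (m i)))"

lemma FD_aa: "lauricella_FD n (-\<nu>) (\<lambda>_. k) (of_nat n * k) x
   = (\<Sum>\<^sub>\<infinity>m\<in>SS n. aa n \<nu> k m * (\<Prod>i<n. x i ^ m i))"
  unfolding lauricella_FD_def aa_def SS_def by simp

definition Bq :: "nat \<Rightarrow> complex \<Rightarrow> complex \<Rightarrow> nat \<Rightarrow> real" where
  "Bq n \<nu> k N = norm (pochhammer (- \<nu>) N) / norm (pochhammer (of_nat n * k) N)"
definition Pk :: "complex \<Rightarrow> nat \<Rightarrow> real" where
  "Pk k j = norm (pochhammer k j / fact j)"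

lemma norm_aa: "norm (aa n \<nu> k m) = Bq n \<nu> k (\<Sum>i<n. m i) * (\<Prod>i<n. Pk k (m i))"
proof -
  have "aa n \<nu> k m = pochhammer (- \<nu>) (\<Sum>i<n. m i) / pochhammer (of_nat n * k) (\<Sum>i<n. m i)
      * (\<Prod>i<n. pochhammer k (m i) / fact (m i))"
    unfolding aa_def by (simp add: prod_dividef)
  then show ?thesis by (simp add: Bq_def Pk_def norm_mult norm_divide prod_norm[symmetric])
qed

lemma lam_choice:
  fixes r :: real assumes r: "0 \<le> r" "r < 1"
  shows "\<exists>l>1. l^4 * r < 1"
proof -
  define x where "x = (1 - r) / 16"
  have x: "0 < x" "x \<le> 1" using r by (auto simp: x_def)
  have xx: "x*x \<le> x*1" using x by (intro mult_left_mono) auto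
  have A: "(1+x)^2 \<le> 1 + 3*x" using xx by (simp add: power2_eq_square algebra_simps)
  have "(1+x)^4 = ((1+x)^2)^2" by simp
  also have "\<dots> \<le> (1 + 3*x)^2" using A x by (intro power_mono) auto
  also have "\<dots> \<le> 1 + 15 * x" using xx by (simp add: power2_eq_square algebra_simps)
  finally have B: "(1+x)^4 \<le> 1 + 15 * x" .
  have C: "r * (1 - r) \<le> 1 * (1 - r)" using r by (intro mult_right_mono) auto
  have D: "r + 15/16 * t < 1" if "t \<le> 1 * (1 - r)" for t
  proof -
    have "16 * r + 15 * t < 16" using that r by (smt (verit))
    then show ?thesis by (simp add: field_simps)
  qed
  have "(1+x)^4 * r \<le> (1 + 15*x) * r" using B r by (intro mult_right_mono) auto
  also have "(1 + 15*x) * r = r + 15/16 * (r * (1 - r))" by (simp add: x_def algebra_simps)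
  also have "\<dots> < 1" using D[OF C] .
  finally have "(1+x)^4 * r < 1" .
  moreover have "1 + x > 1" using x by simp
  ultimately show ?thesis by blast
qed


lemma Bq_Suc: "Bq n \<nu> k (Suc N) = Bq n \<nu> k N * (norm (- \<nu> + of_nat N) / norm (of_nat n * k + of_nat N))"
  by (simp add: Bq_def pochhammer_Suc norm_mult norm_divide)

lemma Pk_Suc: "Pk k (Suc j) = Pk k j * (norm (k + of_nat j) / (real j + 1))"
proof -
  have e: "norm (of_nat (Suc j) :: complex) = real j + 1"
    using norm_of_nat[of "Suc j", where 'a=complex] by simp
  show ?thesis
    by (simp add: Pk_def pochhammer_Suc norm_mult norm_divide fact_Suc e del: of_nat_Suc)
qed

lemma Bq_nonneg: "Bq n \<nu> k N \<ge> 0" by (simp add: Bq_def)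
lemma Pk_nonneg: "Pk k j \<ge> 0" by (simp add: Pk_def)

lemma Bq_bd: assumes "l > 1" shows "\<exists>C\<ge>0. \<forall>N. Bq n \<nu> k N \<le> C * l^N"
proof -
  obtain N0 where N0: "\<And>N. N \<ge> N0 \<Longrightarrow> norm (- \<nu> + of_nat N) \<le> l * norm (of_nat n * k + of_nat N)"
    using ratio_ev[OF assms, of "- \<nu>" "of_nat n * k"] by blast
  show ?thesis
  proof (rule geo_bound[where Nz=N0])
    show "0 \<le> Bq n \<nu> k N" for N by (rule Bq_nonneg)
    show "0 < l" using assms by simp
    fix N assume N: "N \<ge> N0"
    have q: "norm (- \<nu> + of_nat N) / norm (of_nat n * k + of_nat N) \<le> l"
    proof (cases "norm (of_nat n * k + of_nat N :: complex) = 0")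
      case True then show ?thesis using assms by simp
    next
      case False then show ?thesis using N0[OF N] by (simp add: divide_le_eq)
    qed
    have "Bq n \<nu> k (Suc N) \<le> Bq n \<nu> k N * l"
      unfolding Bq_Suc using q Bq_nonneg by (intro mult_left_mono) auto
    then show "Bq n \<nu> k (Suc N) \<le> l * Bq n \<nu> k N" by (simp add: mult.commute)
  qed
qed

lemma Pk_bd: assumes "l > 1" shows "\<exists>C\<ge>0. \<forall>j. Pk k j \<le> C * l^j"
proof -
  obtain N0 where N0: "\<And>N. N \<ge> N0 \<Longrightarrow> norm (k + of_nat N) \<le> l * norm (1 + of_nat N :: complex)"
    using ratio_ev[OF assms, of k 1] by blast
  show ?thesis
  proof (rule geo_bound[where Nz=N0])
    show "0 \<le> Pk k N" for N by (rule Pk_nonneg)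
    show "0 < l" using assms by simp
    fix N assume N: "N \<ge> N0"
    have e: "norm (1 + of_nat N :: complex) = real N + 1"
    proof -
      have "(1 + of_nat N :: complex) = of_nat (Suc N)" by simp
      then show ?thesis using norm_of_nat[of "Suc N", where 'a=complex] by simp
    qed
    have q: "norm (k + of_nat N) / (real N + 1) \<le> l"
      using N0[OF N] e by (simp add: divide_le_eq)
    have "Pk k (Suc N) \<le> Pk k N * l"
      unfolding Pk_Suc using q Pk_nonneg by (intro mult_left_mono) auto
    then show "Pk k (Suc N) \<le> l * Pk k N" by (simp add: mult.commute)
  qed
qed

lemma lin_bd: assumes "l > (1::real)" shows "\<exists>C\<ge>0. \<forall>N. real N + 1 \<le> C * l^N"
proof (rule geo_bound[where Nz="nat \<lceil>1/(l-1)\<rceil>"])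
  show "0 \<le> real N + 1" for N by simp
  show "0 < l" using assms by simp
  fix N assume N: "N \<ge> nat \<lceil>1/(l-1)\<rceil>"
  then have "real N \<ge> 1/(l-1)" by linarith
  then have "(l - 1) * real N \<ge> 1" using assms by (simp add: field_simps)
  then show "real (Suc N) + 1 \<le> l * (real N + 1)" using assms by (simp add: algebra_simps)
qed

lemma KS:
  fixes r :: real
  assumes r: "0 \<le> r" "r < 1"
  shows "(\<lambda>m. norm (aa n \<nu> k m) * (real (\<Sum>i<n. m i) + 1)^2 * r^(\<Sum>i<n. m i)) summable_on SS n"
proof -
  obtain l where l: "l > 1" "l^4 * r < 1" using lam_choice[OF r] by blast
  obtain C1 where C1: "C1 \<ge> 0" "\<And>N. Bq n \<nu> k N \<le> C1 * l^N" using Bq_bd[OF l(1)] by blast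
  obtain C2 where C2: "C2 \<ge> 0" "\<And>N. real N + 1 \<le> C2 * l^N" using lin_bd[OF l(1)] by blast
  obtain C3 where C3: "C3 \<ge> 0" "\<And>j. Pk k j \<le> C3 * l^j" using Pk_bd[OF l(1)] by blast
  define q where "q = l^4 * r"
  have q: "0 \<le> q" "q < 1" using l r by (auto simp: q_def)
  define C where "C = C1 * C3^n * C2^2"
  have bound: "norm (aa n \<nu> k m) * (real (\<Sum>i<n. m i) + 1)^2 * r^(\<Sum>i<n. m i)
      \<le> C * q ^ (\<Sum>i<n. m i)" for m
  proof -
    define N where "N = (\<Sum>i<n. m i)"
    have l0: "l \<ge> 0" using l by simp
    have p: "(\<Prod>i<n. Pk k (m i)) \<le> (\<Prod>i<n. C3 * l ^ m i)"
      using C3 Pk_nonneg by (intro prod_mono) auto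
    also have "\<dots> = C3^n * l^N" by (simp add: prod.distrib power_sum N_def)
    finally have p: "(\<Prod>i<n. Pk k (m i)) \<le> C3^n * l^N" .
    have a1: "norm (aa n \<nu> k m) \<le> (C1 * l^N) * (C3^n * l^N)"
      unfolding norm_aa N_def[symmetric] using C1 p Bq_nonneg l0
      by (intro mult_mono) (auto intro: prod_nonneg Pk_nonneg)
    have a2: "(real N + 1)^2 \<le> (C2 * l^N)^2" using C2 by (intro power_mono) auto
    have "norm (aa n \<nu> k m) * (real N + 1)^2 * r^N \<le> ((C1 * l^N) * (C3^n * l^N)) * (C2 * l^N)^2 * r^N"
      using a1 a2 r C1 C2 C3 l0 by (intro mult_mono mult_right_mono) auto
    also have "\<dots> = (C1*C3^n*C2^2) * ((l^N)^4 * r^N)"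
      by (simp add: power2_eq_square eval_nat_numeral algebra_simps)
    also have "\<dots> = C * q^N"
    proof -
      have "(l^N)^4 = (l^4)^N" by (simp add: power_mult[symmetric] mult.commute)
      then show ?thesis by (simp add: C_def q_def power_mult_distrib)
    qed
    finally show ?thesis unfolding N_def .
  qed
  have "(\<lambda>m. C * q ^ (\<Sum>i<n. m i)) summable_on SS n"
    using geom_multi[OF q] by (rule summable_on_cmult_right)
  then show ?thesis
    by (rule summable_on_comparison_test) (use bound r in auto)
qed



lemma FD_cong:
  assumes "\<And>i. i < d \<Longrightarrow> x i = y i"
  shows "lauricella_FD d a b c x = lauricella_FD d a b c y"
proof -
  have "(\<Prod>i<d. x i ^ m i) = (\<Prod>i<d. y i ^ m i)" for m :: "nat \<Rightarrow> nat"
    by (rule prod.cong) (auto simp: assms)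
  then show ?thesis unfolding lauricella_FD_def by simp
qed

lemma FD_Suc: "lauricella_FD d a b c x = lauricella_FD (Suc d) a b c (x(d := 0))"
  unfolding lauricella_FD_def
proof (rule infsum_cong_neutral)
  fix m :: "nat \<Rightarrow> nat"
  assume m: "m \<in> {m. \<forall>i\<ge>Suc d. m i = 0} - {m. \<forall>i\<ge>d. m i = 0}"
  then obtain j where j: "j \<ge> d" "m j \<noteq> 0" and mz: "\<forall>i\<ge>Suc d. m i = 0" by blast
  have "j = d" using j mz by (metis Suc_leI le_neq_implies_less)
  then have "m d \<noteq> 0" using j by simp
  then have "(\<Prod>i<Suc d. (x(d := 0)) i ^ m i) = 0" by (simp add: lessThan_Suc)
  then show "pochhammer a (\<Sum>i<Suc d. m i) * (\<Prod>i<Suc d. pochhammer (b i) (m i)) /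
         (pochhammer c (\<Sum>i<Suc d. m i) * (\<Prod>i<Suc d. fact (m i))) *
         (\<Prod>i<Suc d. (x(d := 0)) i ^ m i) = 0" by simp
next
  fix m :: "nat \<Rightarrow> nat"
  assume "m \<in> {m. \<forall>i\<ge>d. m i = 0} - {m. \<forall>i\<ge>Suc d. m i = 0}"
  then show "pochhammer a (\<Sum>i<d. m i) * (\<Prod>i<d. pochhammer (b i) (m i)) /
         (pochhammer c (\<Sum>i<d. m i) * (\<Prod>i<d. fact (m i))) * (\<Prod>i<d. x i ^ m i) = 0"
    by auto
next
  fix m :: "nat \<Rightarrow> nat"
  assume "m \<in> {m. \<forall>i\<ge>d. m i = 0} \<inter> {m. \<forall>i\<ge>Suc d. m i = 0}"
  then have md: "m d = 0" by auto
  have "(\<Prod>i<d. (x(d := 0)) i ^ m i) = (\<Prod>i<d. x i ^ m i)" by (rule prod.cong) auto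
  then show "pochhammer a (\<Sum>i<d. m i) * (\<Prod>i<d. pochhammer (b i) (m i)) /
         (pochhammer c (\<Sum>i<d. m i) * (\<Prod>i<d. fact (m i))) * (\<Prod>i<d. x i ^ m i) =
         pochhammer a (\<Sum>i<Suc d. m i) * (\<Prod>i<Suc d. pochhammer (b i) (m i)) /
         (pochhammer c (\<Sum>i<Suc d. m i) * (\<Prod>i<Suc d. fact (m i))) *
         (\<Prod>i<Suc d. (x(d := 0)) i ^ m i)"
    using md by simp
qed

lemma FD_perm:
  assumes s: "\<sigma> permutes {..<n}"
  shows "lauricella_FD n a (\<lambda>_. b) c (x \<circ> \<sigma>) = lauricella_FD n a (\<lambda>_. b) c x"
  unfolding lauricella_FD_def
proof (rule infsum_reindex_bij_witness[where j="\<lambda>m. m \<circ> inv \<sigma>" and i="\<lambda>m. m \<circ> \<sigma>"])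
  have si: "inv \<sigma> permutes {..<n}" using permutes_inv[OF s] .
  fix m :: "nat \<Rightarrow> nat"
  assume m: "m \<in> {m. \<forall>i\<ge>n. m i = 0}"
  show "m \<circ> \<sigma> \<circ> inv \<sigma> = m" using permutes_inverses[OF s] by (auto simp: fun_eq_iff)
  show "m \<circ> \<sigma> \<in> {m. \<forall>i\<ge>n. m i = 0}"
  proof (intro CollectI allI impI)
    fix i assume "n \<le> i"
    then have "\<sigma> i = i" using permutes_not_in[OF s, of i] by simp
    then show "(m \<circ> \<sigma>) i = 0" using m \<open>n \<le> i\<close> by simp
  qed
  show "m \<circ> inv \<sigma> \<circ> \<sigma> = m" using permutes_inverses[OF s] by (auto simp: fun_eq_iff)
  show "m \<circ> inv \<sigma> \<in> {m. \<forall>i\<ge>n. m i = 0}"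
  proof (intro CollectI allI impI)
    fix i assume "n \<le> i"
    then have "inv \<sigma> i = i" using permutes_not_in[OF si, of i] by simp
    then show "(m \<circ> inv \<sigma>) i = 0" using m \<open>n \<le> i\<close> by simp
  qed
  have e1: "(\<Sum>i<n. (m \<circ> inv \<sigma>) i) = (\<Sum>i<n. m i)"
    using sum.permute[OF si, of m] by simp
  have e2: "(\<Prod>i<n. f ((m \<circ> inv \<sigma>) i)) = (\<Prod>i<n. f (m i))" for f :: "nat \<Rightarrow> complex"
    using prod.permute[OF si, of "\<lambda>i. f (m i)"] by (simp add: o_def)
  have e3: "(\<Prod>i<n. x i ^ (m \<circ> inv \<sigma>) i) = (\<Prod>i<n. (x \<circ> \<sigma>) i ^ m i)"
    using prod.permute[OF s, of "\<lambda>i. x i ^ m (inv \<sigma> i)"] by (simp add: o_def permutes_inverses[OF s])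
  show "pochhammer a (\<Sum>i<n. (m \<circ> inv \<sigma>) i) * (\<Prod>i<n. pochhammer b ((m \<circ> inv \<sigma>) i)) /
         (pochhammer c (\<Sum>i<n. (m \<circ> inv \<sigma>) i) * (\<Prod>i<n. fact ((m \<circ> inv \<sigma>) i))) *
         (\<Prod>i<n. x i ^ (m \<circ> inv \<sigma>) i) =
         pochhammer a (\<Sum>i<n. m i) * (\<Prod>i<n. pochhammer b (m i)) /
         (pochhammer c (\<Sum>i<n. m i) * (\<Prod>i<n. fact (m i))) * (\<Prod>i<n. (x \<circ> \<sigma>) i ^ m i)"
    by (simp only: e1 e2[of "pochhammer b"] e2[of fact] e3)
qed



lemma uniform_limit_infsum:
  fixes T :: "'a \<Rightarrow> 'b \<Rightarrow> complex"
  assumes M: "M summable_on A" and bd: "\<And>m t. m \<in> A \<Longrightarrow> t \<in> K \<Longrightarrow> norm (T m t) \<le> M m"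
    and Mnn: "\<And>m. m \<in> A \<Longrightarrow> M m \<ge> 0"
  shows "uniform_limit K (\<lambda>F t. \<Sum>m\<in>F. T m t) (\<lambda>t. \<Sum>\<^sub>\<infinity>m\<in>A. T m t) (finite_subsets_at_top A)"
proof (rule uniform_limitI)
  fix e :: real assume e: "e > 0"
  have "((\<lambda>F. sum M F) \<longlongrightarrow> infsum M A) (finite_subsets_at_top A)"
    using M by (simp add: has_sum_def[symmetric])
  then have ev1: "eventually (\<lambda>F. dist (sum M F) (infsum M A) < e) (finite_subsets_at_top A)"
    using e by (rule tendstoD)
  have ev2: "eventually (\<lambda>F. finite F \<and> F \<subseteq> A) (finite_subsets_at_top A)"
    by (rule eventually_finite_subsets_at_top_weakI) auto
  show "eventually (\<lambda>F. \<forall>t\<in>K. dist (\<Sum>m\<in>F. T m t) (\<Sum>\<^sub>\<infinity>m\<in>A. T m t) < e) (finite_subsets_at_top A)"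
    using eventually_conj[OF ev1 ev2]
  proof (rule eventually_mono)
    fix F assume F: "dist (sum M F) (infsum M A) < e \<and> finite F \<and> F \<subseteq> A"
    show "\<forall>t\<in>K. dist (\<Sum>m\<in>F. T m t) (\<Sum>\<^sub>\<infinity>m\<in>A. T m t) < e"
    proof
      fix t assume t: "t \<in> K"
      have nT: "(\<lambda>m. norm (T m t)) summable_on A"
        by (rule summable_on_comparison_test[OF M]) (use bd t in auto)
      have sT: "(\<lambda>m. T m t) summable_on A" using nT summable_on_iff_abs_summable_on_complex by blast
      have sF: "(\<lambda>m. T m t) summable_on F" using F by simp
      have nTD: "(\<lambda>m. norm (T m t)) summable_on (A - F)" using nT by (rule summable_on_subset_banach) auto
      have MD: "M summable_on (A - F)" using M by (rule summable_on_subset_banach) auto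
      have e1: "(\<Sum>\<^sub>\<infinity>m\<in>A - F. T m t) = (\<Sum>\<^sub>\<infinity>m\<in>A. T m t) - (\<Sum>m\<in>F. T m t)"
        using infsum_Diff[OF sT sF] F by simp
      have e2: "(\<Sum>\<^sub>\<infinity>m\<in>A - F. M m) = infsum M A - sum M F"
        using infsum_Diff[OF M, of F] F by simp
      have "dist (\<Sum>m\<in>F. T m t) (\<Sum>\<^sub>\<infinity>m\<in>A. T m t) = norm (\<Sum>\<^sub>\<infinity>m\<in>A - F. T m t)"
        by (simp add: dist_norm e1 norm_minus_commute)
      also have "\<dots> \<le> (\<Sum>\<^sub>\<infinity>m\<in>A - F. norm (T m t))" by (rule norm_infsum_bound) (rule nTD)
      also have "\<dots> \<le> (\<Sum>\<^sub>\<infinity>m\<in>A - F. M m)" by (rule infsum_mono[OF nTD MD]) (use bd t in auto)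
      also have "\<dots> = infsum M A - sum M F" by (rule e2)
      also have "\<dots> < e"
      proof -
        have "\<bar>sum M F - infsum M A\<bar> < e" using F by (simp add: dist_real_def)
        then show ?thesis by linarith
      qed
      finally show "dist (\<Sum>m\<in>F. T m t) (\<Sum>\<^sub>\<infinity>m\<in>A. T m t) < e" .
    qed
  qed
qed

lemma infsum_deriv:
  fixes T D :: "'a \<Rightarrow> complex \<Rightarrow> complex"
  assumes M: "M summable_on A" and bd: "\<And>m t. m \<in> A \<Longrightarrow> t \<in> cball z r \<Longrightarrow> norm (T m t) \<le> M m"
    and Mnn: "\<And>m. m \<in> A \<Longrightarrow> M m \<ge> 0"
    and cont: "\<And>m. m \<in> A \<Longrightarrow> continuous_on (cball z r) (T m)"
    and der: "\<And>m w. m \<in> A \<Longrightarrow> w \<in> ball z r \<Longrightarrow> (T m has_field_derivative D m w) (at w)"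
    and r: "r > 0"
  shows "\<exists>g'. \<forall>w\<in>ball z r. ((\<lambda>t. \<Sum>\<^sub>\<infinity>m\<in>A. T m t) has_field_derivative g' w) (at w)
                \<and> ((\<lambda>m. D m w) has_sum g' w) A"
proof -
  have ul: "uniform_limit (cball z r) (\<lambda>F t. \<Sum>m\<in>F. T m t) (\<lambda>t. \<Sum>\<^sub>\<infinity>m\<in>A. T m t) (finite_subsets_at_top A)"
    by (rule uniform_limit_infsum[OF M bd Mnn])
  have ev: "eventually (\<lambda>F. continuous_on (cball z r) (\<lambda>t. \<Sum>m\<in>F. T m t) \<and>
        (\<forall>w\<in>ball z r. ((\<lambda>t. \<Sum>m\<in>F. T m t) has_field_derivative (\<Sum>m\<in>F. D m w)) (at w)))
        (finite_subsets_at_top A)"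
  proof (rule eventually_finite_subsets_at_top_weakI)
    fix X assume X: "finite X" "X \<subseteq> A"
    show "continuous_on (cball z r) (\<lambda>t. \<Sum>m\<in>X. T m t) \<and>
        (\<forall>w\<in>ball z r. ((\<lambda>t. \<Sum>m\<in>X. T m t) has_field_derivative (\<Sum>m\<in>X. D m w)) (at w))"
      using X cont der by (auto intro!: continuous_on_sum DERIV_sum)
  qed
  obtain g' where g': "\<And>w. w \<in> ball z r \<Longrightarrow> ((\<lambda>t. \<Sum>\<^sub>\<infinity>m\<in>A. T m t) has_field_derivative (g' w)) (at w)
        \<and> ((\<lambda>F. \<Sum>m\<in>F. D m w) \<longlongrightarrow> g' w) (finite_subsets_at_top A)"
    using has_complex_derivative_uniform_limit[OF ev ul finite_subsets_at_top_neq_bot r] by blast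
  show ?thesis
  proof (intro exI[of _ g'] ballI)
    fix w assume "w \<in> ball z r"
    then show "((\<lambda>t. \<Sum>\<^sub>\<infinity>m\<in>A. T m t) has_field_derivative g' w) (at w) \<and> ((\<lambda>m. D m w) has_sum g' w) A"
      using g'[of w] by (simp add: has_sum_def)
  qed
qed



lemma prod_pow_bound:
  fixes y :: "nat \<Rightarrow> complex"
  assumes "\<And>i. i \<in> A \<Longrightarrow> norm (y i) \<le> r" "0 \<le> r"
  shows "norm (\<Prod>i\<in>A. y i ^ m i) \<le> r ^ (\<Sum>i\<in>A. m i)"
proof -
  have "norm (\<Prod>i\<in>A. y i ^ m i) = (\<Prod>i\<in>A. norm (y i) ^ m i)"
    by (simp add: prod_norm[symmetric] norm_power)
  also have "\<dots> \<le> (\<Prod>i\<in>A. r ^ m i)"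
    using assms by (intro prod_mono) (auto intro: power_mono)
  also have "\<dots> = r ^ (\<Sum>i\<in>A. m i)" by (simp add: power_sum)
  finally show ?thesis .
qed

lemma sum_upd: "finite A \<Longrightarrow> j \<in> A \<Longrightarrow> (\<Sum>i\<in>A. (f(j := v)) i) = (\<Sum>i\<in>A - {j}. f i) + (v::'a::comm_monoid_add)"
proof -
  assume A: "finite A" "j \<in> A"
  have "(\<Sum>i\<in>A. (f(j := v)) i) = (f(j := v)) j + (\<Sum>i\<in>A - {j}. (f(j := v)) i)"
    using A by (rule sum.remove)
  also have "(\<Sum>i\<in>A - {j}. (f(j := v)) i) = (\<Sum>i\<in>A - {j}. f i)" by (rule sum.cong) auto
  finally show ?thesis by (simp add: add.commute)
qed

lemma prod_upd: "finite A \<Longrightarrow> j \<in> A \<Longrightarrow> (\<Prod>i\<in>A. g ((f(j := v)) i)) = (\<Prod>i\<in>A - {j}. g (f i)) * (g v::'a::comm_monoid_mult)"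
proof -
  assume A: "finite A" "j \<in> A"
  have "(\<Prod>i\<in>A. g ((f(j := v)) i)) = g ((f(j := v)) j) * (\<Prod>i\<in>A - {j}. g ((f(j := v)) i))"
    using A by (rule prod.remove)
  also have "(\<Prod>i\<in>A - {j}. g ((f(j := v)) i)) = (\<Prod>i\<in>A - {j}. g (f i))" by (rule prod.cong) auto
  finally show ?thesis by (simp add: mult.commute)
qed

lemma div_aux:
  fixes a b c d e f g s :: complex
  assumes "s \<noteq> 0"
  shows "(a * b) * (c * d) / ((e * f) * (g * s)) * s = a * c / (e * g) * b * d / f"
proof -
  have "(a * b) * (c * d) / ((e * f) * (g * s)) * s = (a * b) * (c * d) / ((e * f) * g)" using assms by (simp add: ac_simps)
  also have "\<dots> = a * c / (e * g) * b * d / f" by (simp add: divide_inverse inverse_mult_distrib ac_simps)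
  finally show ?thesis .
qed

lemma aa_shift:
  assumes nk: "\<forall>j::nat. of_nat n * k \<noteq> - of_nat j" and j: "j < n"
  shows "aa n \<nu> k (m(j := Suc (m j))) * of_nat (Suc (m j))
     = aa n \<nu> k m * (- \<nu> + of_nat (\<Sum>i<n. m i)) * (k + of_nat (m j)) / (of_nat n * k + of_nat (\<Sum>i<n. m i))"
proof -
  define N where "N = (\<Sum>i<n. m i)"
  have jA: "j \<in> {..<n}" using j by simp
  have sN: "N = (\<Sum>i\<in>{..<n} - {j}. m i) + m j"
    unfolding N_def using sum.remove[OF _ jA, of m] by (simp add: add.commute)
  have s1: "(\<Sum>i<n. (m(j := Suc (m j))) i) = Suc N"
    using sum_upd[OF _ jA, of m "Suc (m j)"] sN by simp
  have p1: "(\<Prod>i<n. pochhammer k ((m(j := Suc (m j))) i)) = (\<Prod>i<n. pochhammer k (m i)) * (k + of_nat (m j))"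
  proof -
    have "(\<Prod>i<n. pochhammer k ((m(j := Suc (m j))) i)) = (\<Prod>i\<in>{..<n} - {j}. pochhammer k (m i)) * pochhammer k (Suc (m j))"
      by (rule prod_upd) (use jA in auto)
    also have "\<dots> = ((\<Prod>i\<in>{..<n} - {j}. pochhammer k (m i)) * pochhammer k (m j)) * (k + of_nat (m j))"
      by (simp add: pochhammer_Suc mult.assoc)
    also have "(\<Prod>i\<in>{..<n} - {j}. pochhammer k (m i)) * pochhammer k (m j) = (\<Prod>i<n. pochhammer k (m i))"
      using prod.remove[OF _ jA, of "\<lambda>i. pochhammer k (m i)"] by (simp add: mult.commute)
    finally show ?thesis .
  qed
  have p2: "(\<Prod>i<n. (fact ((m(j := Suc (m j))) i) :: complex)) = (\<Prod>i<n. fact (m i)) * of_nat (Suc (m j))"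
  proof -
    have "(\<Prod>i<n. (fact ((m(j := Suc (m j))) i) :: complex)) = (\<Prod>i\<in>{..<n} - {j}. fact (m i)) * fact (Suc (m j))"
      by (rule prod_upd) (use jA in auto)
    also have "\<dots> = ((\<Prod>i\<in>{..<n} - {j}. fact (m i)) * fact (m j)) * of_nat (Suc (m j))"
      by (simp only: fact_Suc mult_ac)
    also have "(\<Prod>i\<in>{..<n} - {j}. fact (m i)) * fact (m j) = (\<Prod>i<n. (fact (m i) :: complex))"
      using prod.remove[OF _ jA, of "\<lambda>i. fact (m i) :: complex"] by (simp add: mult.commute)
    finally show ?thesis .
  qed
  have nz1: "pochhammer (of_nat n * k) N \<noteq> 0"
    using nk by (auto simp: pochhammer_eq_0_iff)
  have nz2: "of_nat n * k + of_nat N \<noteq> 0"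
    using nk[rule_format, of N] by (auto simp: add_eq_0_iff)
  have nz3: "(\<Prod>i<n. (fact (m i) :: complex)) \<noteq> 0" by simp
  have nz4: "(of_nat (Suc (m j)) :: complex) \<noteq> 0" by (simp del: of_nat_Suc)
  show ?thesis
    unfolding aa_def s1 p1 p2 N_def[symmetric] pochhammer_Suc
    by (rule div_aux[OF nz4])
qed



context fixes n :: nat and \<nu> k :: complex and w :: "nat \<Rightarrow> complex"
begin
definition Tm where "Tm m t = aa n \<nu> k m * (\<Prod>i<n. (1 - t * w i) ^ m i)"
definition Fp where "Fp m t j = of_nat (m j) * (1 - t * w j) ^ (m j - 1) * (- w j)"
definition Pj where "Pj m t j = (\<Prod>i\<in>{..<n} - {j}. (1 - t * w i) ^ m i)"
definition Dm where "Dm m t = aa n \<nu> k m * (\<Sum>j<n. Fp m t j * Pj m t j)"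
definition Em where "Em j m t = aa n \<nu> k m * of_nat (m j) * (1 - t * w j) ^ (m j - 1) * Pj m t j"
end

lemma Tm_deriv: "(Tm n \<nu> k w m has_field_derivative Dm n \<nu> k w m t) (at t)"
proof -
  have "((\<lambda>u. \<Prod>i\<in>{..<n}. (1 - u * w i) ^ m i) has_field_derivative
        (\<Sum>j\<in>{..<n}. Fp w m t j * (\<Prod>i\<in>{..<n} - {j}. (1 - t * w i) ^ m i))) (at t)"
  proof (rule has_field_derivative_prod)
    fix j
    show "((\<lambda>u. (1 - u * w j) ^ m j) has_field_derivative Fp w m t j) (at t)"
      unfolding Fp_def by (auto intro!: derivative_eq_intros)
  qed
  then show ?thesis unfolding Tm_def Dm_def Pj_def
    by (intro DERIV_cmult) simp
qed

lemma Tm_cont: "continuous_on S (Tm n \<nu> k w m)"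
  unfolding Tm_def by (intro continuous_intros)

lemma tD: "t * Dm n \<nu> k w m t = of_nat (\<Sum>i<n. m i) * Tm n \<nu> k w m t - (\<Sum>j<n. Em n \<nu> k w j m t)"
proof -
  define Y where "Y = (\<Prod>i<n. (1 - t * w i) ^ m i)"
  have pj: "t * Fp w m t j * Pj n w m t j
      = of_nat (m j) * Y - of_nat (m j) * (1 - t * w j) ^ (m j - 1) * Pj n w m t j" if j: "j < n" for j
  proof -
    define y where "y = 1 - t * w j"
    have k1: "of_nat (m j) * y ^ (m j - 1) * y = of_nat (m j) * y ^ m j"
      by (cases "m j") auto
    have k2: "y ^ m j * Pj n w m t j = Y"
      unfolding Y_def Pj_def y_def using prod.remove[of "{..<n}" j "\<lambda>i. (1 - t * w i) ^ m i"] j by simp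
    have "t * Fp w m t j * Pj n w m t j = (of_nat (m j) * y ^ (m j - 1) * y) * Pj n w m t j
              - of_nat (m j) * y ^ (m j - 1) * Pj n w m t j"
      unfolding Fp_def y_def by (simp add: algebra_simps)
    also have "\<dots> = of_nat (m j) * Y - of_nat (m j) * y ^ (m j - 1) * Pj n w m t j"
      unfolding k1 k2[symmetric] by (simp add: mult.assoc)
    finally show ?thesis unfolding y_def .
  qed
  have "t * Dm n \<nu> k w m t = aa n \<nu> k m * (\<Sum>j<n. t * Fp w m t j * Pj n w m t j)"
    unfolding Dm_def by (simp add: sum_distrib_left algebra_simps)
  also have "(\<Sum>j<n. t * Fp w m t j * Pj n w m t j)
      = (\<Sum>j<n. of_nat (m j) * Y - of_nat (m j) * (1 - t * w j) ^ (m j - 1) * Pj n w m t j)"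
    by (rule sum.cong) (auto simp: pj)
  also have "\<dots> = of_nat (\<Sum>i<n. m i) * Y - (\<Sum>j<n. of_nat (m j) * (1 - t * w j) ^ (m j - 1) * Pj n w m t j)"
    by (simp add: sum_subtractf sum_distrib_right)
  finally show ?thesis
    unfolding Tm_def Em_def Y_def by (simp add: algebra_simps sum_distrib_left)
qed

lemma le_sq1: "real N \<le> (real N + 1)^2"
proof -
  have "0 \<le> real N * real N" by simp
  then show ?thesis by (simp add: power2_eq_square algebra_simps)
qed

lemma Tm_bd:
  assumes "\<And>i. i < n \<Longrightarrow> norm (1 - t * w i) \<le> 1/2"
  shows "norm (Tm n \<nu> k w m t) \<le> norm (aa n \<nu> k m) * (1/2) ^ (\<Sum>i<n. m i)"
  unfolding Tm_def norm_mult using assms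
  by (intro mult_left_mono prod_pow_bound) auto

lemma NTm_bd:
  assumes "\<And>i. i < n \<Longrightarrow> norm (1 - t * w i) \<le> 1/2"
  shows "norm (of_nat (\<Sum>i<n. m i) * Tm n \<nu> k w m t)
     \<le> norm (aa n \<nu> k m) * (real (\<Sum>i<n. m i) + 1)^2 * (1/2) ^ (\<Sum>i<n. m i)"
proof -
  define N where "N = (\<Sum>i<n. m i)"
  have "norm (of_nat N * Tm n \<nu> k w m t) = real N * norm (Tm n \<nu> k w m t)"
    by (simp add: norm_mult)
  also have "\<dots> \<le> real N * (norm (aa n \<nu> k m) * (1/2) ^ N)"
  proof -
    have "norm (Tm n \<nu> k w m t) \<le> norm (aa n \<nu> k m) * (1/2) ^ (\<Sum>i<n. m i)"
      by (rule Tm_bd) (rule assms)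
    then show ?thesis unfolding N_def by (rule mult_left_mono) (simp add: sum_nonneg)
  qed
  also have "\<dots> \<le> (real N + 1)^2 * (norm (aa n \<nu> k m) * (1/2) ^ N)"
    by (intro mult_right_mono le_sq1) auto
  finally show ?thesis unfolding N_def by (simp add: algebra_simps)
qed

lemma Em_bd:
  assumes "\<And>i. i < n \<Longrightarrow> norm (1 - t * w i) \<le> 1/2" and j: "j < n"
  shows "norm (Em n \<nu> k w j m t)
     \<le> 2 * (norm (aa n \<nu> k m) * (real (\<Sum>i<n. m i) + 1)^2 * (1/2) ^ (\<Sum>i<n. m i))"
proof (cases "m j = 0")
  case True then show ?thesis by (simp add: Em_def)
next
  case False
  define N where "N = (\<Sum>i<n. m i)"
  have jA: "j \<in> {..<n}" using j by simp
  have sN: "N = (\<Sum>i\<in>{..<n} - {j}. m i) + m j"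
    unfolding N_def using sum.remove[OF _ jA, of m] by (simp add: add.commute)
  have mjN: "m j \<le> N" using sN by simp
  have b1: "norm ((1 - t * w j) ^ (m j - 1)) \<le> 2 * (1/2) ^ m j"
  proof -
    have "norm ((1 - t * w j) ^ (m j - 1)) \<le> (1/2) ^ (m j - 1)"
      unfolding norm_power using assms(1)[OF j] by (intro power_mono) auto
    also have "(1/2::real) ^ (m j - 1) = 2 * (1/2) ^ m j"
      using False by (cases "m j") auto
    finally show ?thesis .
  qed
  have b2: "norm (Pj n w m t j) \<le> (1/2) ^ (\<Sum>i\<in>{..<n} - {j}. m i)"
    unfolding Pj_def using assms(1) by (intro prod_pow_bound) auto
  have "norm (Em n \<nu> k w j m t) = norm (aa n \<nu> k m) * real (m j) * norm ((1 - t * w j) ^ (m j - 1)) * norm (Pj n w m t j)"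
    by (simp add: Em_def norm_mult)
  also have "\<dots> \<le> norm (aa n \<nu> k m) * real (m j) * (2 * (1/2) ^ m j) * (1/2) ^ (\<Sum>i\<in>{..<n} - {j}. m i)"
    using b1 b2 by (intro mult_mono mult_left_mono) auto
  also have "\<dots> = 2 * (norm (aa n \<nu> k m) * real (m j) * (1/2) ^ N)"
    unfolding sN by (simp add: power_add)
  also have "\<dots> \<le> 2 * (norm (aa n \<nu> k m) * (real N + 1)^2 * (1/2) ^ N)"
  proof -
    have "real (m j) \<le> (real N + 1)^2" using mjN le_sq1[of N] by linarith
    then show ?thesis by (intro mult_left_mono mult_right_mono) auto
  qed
  finally show ?thesis unfolding N_def .
qed

lemma shift_has_sum:
  assumes j: "j < n" and z: "\<And>m. m \<in> SS n \<Longrightarrow> m j = 0 \<Longrightarrow> f m = 0"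
  shows "(f has_sum X) (SS n) \<longleftrightarrow> ((\<lambda>m. f (m(j := Suc (m j)))) has_sum X) (SS n)"
proof -
  define Sj where "Sj = {m \<in> SS n. m j > 0}"
  have "(f has_sum X) (SS n) \<longleftrightarrow> (f has_sum X) Sj"
    by (rule has_sum_cong_neutral) (use z in \<open>auto simp: Sj_def\<close>)
  also have "\<dots> \<longleftrightarrow> ((\<lambda>m. f (m(j := Suc (m j)))) has_sum X) (SS n)"
  proof (rule has_sum_reindex_bij_witness[symmetric, where j="\<lambda>m. m(j := Suc (m j))" and i="\<lambda>m. m(j := m j - 1)"])
    fix m assume m: "m \<in> SS n"
    show "(m(j := Suc (m j)))(j := (m(j := Suc (m j))) j - 1) = m" by simp
    show "m(j := Suc (m j)) \<in> Sj" using m j by (auto simp: Sj_def SS_def)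
    show "f (m(j := Suc (m j))) = f (m(j := Suc (m j)))" by simp
  next
    fix m assume m: "m \<in> Sj"
    show "(m(j := m j - 1))(j := Suc ((m(j := m j - 1)) j)) = m" using m by (auto simp: Sj_def)
    show "m(j := m j - 1) \<in> SS n" using m j by (auto simp: Sj_def SS_def)
  qed simp
  finally show ?thesis .
qed



lemma summable_by_bound:
  fixes f :: "'a \<Rightarrow> complex"
  assumes "K summable_on A" "\<And>m. m \<in> A \<Longrightarrow> norm (f m) \<le> K m"
  shows "f summable_on A"
proof -
  have "(\<lambda>m. norm (f m)) summable_on A"
    by (rule summable_on_comparison_test[OF assms(1)]) (use assms(2) in auto)
  then show ?thesis using summable_on_iff_abs_summable_on_complex by blast
qed

lemma pde:
  assumes nk: "\<forall>j::nat. of_nat n * k \<noteq> - of_nat j"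
    and bd: "\<And>i. i < n \<Longrightarrow> norm (1 - t * w i) \<le> 1/2"
    and hD: "((\<lambda>m. Dm n \<nu> k w m t) has_sum G') (SS n)"
    and hT: "((\<lambda>m. Tm n \<nu> k w m t) has_sum G) (SS n)"
  shows "t * G' = \<nu> * G"
proof -
  define K where "K m = norm (aa n \<nu> k m) * (real (\<Sum>i<n. m i) + 1)^2 * (1/2)^(\<Sum>i<n. m i)" for m
  have Ks: "K summable_on SS n" using KS[of "1/2" n \<nu> k] unfolding K_def by simp
  have K2: "(\<lambda>m. 2 * K m) summable_on SS n" using Ks by (rule summable_on_cmult_right)
  have sNT: "(\<lambda>m. of_nat (\<Sum>i<n. m i) * Tm n \<nu> k w m t) summable_on SS n"
    by (rule summable_by_bound[OF Ks]) (unfold K_def, rule NTm_bd, rule bd)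
  define XN where "XN = infsum (\<lambda>m. of_nat (\<Sum>i<n. m i) * Tm n \<nu> k w m t) (SS n)"
  have hN: "((\<lambda>m. of_nat (\<Sum>i<n. m i) * Tm n \<nu> k w m t) has_sum XN) (SS n)"
    using sNT unfolding XN_def by simp
  define XE where "XE j = infsum (\<lambda>m. Em n \<nu> k w j m t) (SS n)" for j
  have hE: "((\<lambda>m. Em n \<nu> k w j m t) has_sum XE j) (SS n)" if j: "j < n" for j
  proof -
    have "(\<lambda>m. Em n \<nu> k w j m t) summable_on SS n"
      by (rule summable_by_bound[OF K2]) (simp only: K_def Em_bd[OF bd j])
    then show ?thesis unfolding XE_def by simp
  qed
  have h1: "((\<lambda>m. t * Dm n \<nu> k w m t) has_sum (t * G')) (SS n)"
    using hD by (rule has_sum_cmult_right)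
  have h2: "((\<lambda>m. of_nat (\<Sum>i<n. m i) * Tm n \<nu> k w m t - (\<Sum>j<n. Em n \<nu> k w j m t))
      has_sum (XN - (\<Sum>j<n. XE j))) (SS n)"
    by (rule has_sum_diff[OF hN has_sum_sum_fin]) (auto intro: hE)
  have e1: "t * G' = XN - (\<Sum>j<n. XE j)"
    using h1 h2 unfolding tD by (rule has_sum_unique)
  define Y where "Y m = (\<Prod>i<n. (1 - t * w i) ^ m i)" for m
  have hE': "((\<lambda>m. Em n \<nu> k w j (m(j := Suc (m j))) t) has_sum XE j) (SS n)" if j: "j < n" for j
    using hE[OF j] shift_has_sum[OF j, of "\<lambda>m. Em n \<nu> k w j m t"] by (simp add: Em_def)
  have pE: "Em n \<nu> k w j (m(j := Suc (m j))) t
     = aa n \<nu> k m * (- \<nu> + of_nat (\<Sum>i<n. m i)) * (k + of_nat (m j)) / (of_nat n * k + of_nat (\<Sum>i<n. m i)) * Y m"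
    if j: "j < n" for j m
  proof -
    have jA: "j \<in> {..<n}" using j by simp
    have p1: "Pj n w (m(j := Suc (m j))) t j = Pj n w m t j" unfolding Pj_def by (rule prod.cong) auto
    have p2: "(1 - t * w j) ^ m j * Pj n w m t j = Y m"
      unfolding Y_def Pj_def using prod.remove[OF _ jA, of "\<lambda>i. (1 - t * w i) ^ m i"] by simp
    have "Em n \<nu> k w j (m(j := Suc (m j))) t = (aa n \<nu> k (m(j := Suc (m j))) * of_nat (Suc (m j))) * ((1 - t * w j) ^ m j * Pj n w m t j)"
      unfolding Em_def p1 by (simp add: mult_ac del: of_nat_Suc)
    also have "\<dots> = aa n \<nu> k m * (- \<nu> + of_nat (\<Sum>i<n. m i)) * (k + of_nat (m j)) / (of_nat n * k + of_nat (\<Sum>i<n. m i)) * Y m"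
      unfolding aa_shift[OF nk j] p2 ..
    finally show ?thesis .
  qed
  have hS: "((\<lambda>m. \<Sum>j<n. Em n \<nu> k w j (m(j := Suc (m j))) t) has_sum (\<Sum>j<n. XE j)) (SS n)"
    by (rule has_sum_sum_fin) (auto intro: hE')
  have h3: "((\<lambda>m. of_nat (\<Sum>i<n. m i) * Tm n \<nu> k w m t - \<nu> * Tm n \<nu> k w m t) has_sum (XN - \<nu> * G)) (SS n)"
    by (rule has_sum_diff[OF hN has_sum_cmult_right[OF hT]])
  have pS: "(\<Sum>j<n. Em n \<nu> k w j (m(j := Suc (m j))) t)
      = of_nat (\<Sum>i<n. m i) * Tm n \<nu> k w m t - \<nu> * Tm n \<nu> k w m t" for m
  proof -
    define N where "N = (\<Sum>i<n. m i)"
    define A where "A = aa n \<nu> k m * (- \<nu> + of_nat N)"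
    define B where "B = of_nat n * k + (of_nat N :: complex)"
    have Bnz: "B \<noteq> 0" using nk[rule_format, of N] unfolding B_def by (auto simp: add_eq_0_iff)
    have sk: "(\<Sum>j<n. (k + of_nat (m j))) = B"
      unfolding B_def N_def by (simp add: sum.distrib of_nat_sum)
    have "(\<Sum>j<n. Em n \<nu> k w j (m(j := Suc (m j))) t) = (\<Sum>j<n. A * (k + of_nat (m j)) / B * Y m)"
      by (rule sum.cong) (auto simp: pE A_def B_def N_def)
    also have "\<dots> = A * (\<Sum>j<n. (k + of_nat (m j))) / B * Y m"
      by (simp add: sum_distrib_left sum_distrib_right sum_divide_distrib)
    also have "\<dots> = A * Y m" unfolding sk using Bnz by simp
    also have "\<dots> = of_nat N * Tm n \<nu> k w m t - \<nu> * Tm n \<nu> k w m t"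
      unfolding A_def Tm_def Y_def by (simp add: algebra_simps)
    finally show ?thesis unfolding N_def .
  qed
  have e2: "(\<Sum>j<n. XE j) = XN - \<nu> * G"
    using hS h3 unfolding pS by (rule has_sum_unique)
  show ?thesis using e1 e2 by simp
qed



lemma near_bd:
  fixes zr :: real and t :: complex
  assumes "\<bar>zr - 1\<bar> < 1/8" "norm (1 - t) \<le> 1/4"
  shows "norm (1 - t * of_real zr) \<le> 1/2"
proof -
  have e: "1 - t * of_real zr = of_real (1 - zr) + (1 - t) * of_real zr" by (simp add: algebra_simps)
  have "norm (1 - t * of_real zr) \<le> norm (of_real (1 - zr) :: complex) + norm ((1 - t) * of_real zr)"
    unfolding e by (rule norm_triangle_ineq)
  also have "\<dots> = \<bar>1 - zr\<bar> + norm (1 - t) * \<bar>zr\<bar>" by (simp only: norm_mult norm_of_real)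
  also have "\<dots> \<le> 1/8 + 1/4 * (9/8)"
  proof -
    have "\<bar>zr\<bar> \<le> 9/8" using assms(1) by linarith
    then have "norm (1 - t) * \<bar>zr\<bar> \<le> 1/4 * (9/8)" using assms(2) by (intro mult_mono) auto
    then show ?thesis using assms(1) by linarith
  qed
  finally show ?thesis by simp
qed

lemma homog:
  fixes z :: "nat \<Rightarrow> real" and t :: complex
  assumes nk: "\<forall>j::nat. of_nat n * k \<noteq> - of_nat j"
    and z: "\<And>i. i < n \<Longrightarrow> \<bar>z i - 1\<bar> < 1/8"
    and t: "t \<in> ball 1 (1/4)"
  shows "lauricella_FD n (-\<nu>) (\<lambda>_. k) (of_nat n * k) (\<lambda>i. 1 - t * of_real (z i))
       = t powr \<nu> * lauricella_FD n (-\<nu>) (\<lambda>_. k) (of_nat n * k) (\<lambda>i. 1 - 1 * of_real (z i))"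
proof -
  define w where "w i = (of_real (z i) :: complex)" for i
  define K where "K m = norm (aa n \<nu> k m) * (real (\<Sum>i<n. m i) + 1)^2 * (1/2)^(\<Sum>i<n. m i)" for m
  have Ks: "K summable_on SS n" using KS[of "1/2" n \<nu> k] unfolding K_def by simp
  have Knn: "K m \<ge> 0" for m unfolding K_def by simp
  have bdc: "norm (1 - u * w i) \<le> 1/2" if "u \<in> cball 1 (1/4)" "i < n" for u i
    unfolding w_def using z[OF that(2)] that(1) by (intro near_bd) (auto simp: dist_norm)
  have TK: "norm (Tm n \<nu> k w m u) \<le> K m" if "u \<in> cball 1 (1/4)" for m u
  proof -
    have "norm (Tm n \<nu> k w m u) \<le> norm (aa n \<nu> k m) * (1/2) ^ (\<Sum>i<n. m i)"
      by (rule Tm_bd) (rule bdc[OF that])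
    also have "\<dots> \<le> norm (aa n \<nu> k m) * (1/2) ^ (\<Sum>i<n. m i) * (real (\<Sum>i<n. m i) + 1)^2"
    proof -
      have o: "1 \<le> (real (\<Sum>i<n. m i) + 1)^2" by (rule one_le_power) (simp add: sum_nonneg)
      have "norm (aa n \<nu> k m) * (1/2) ^ (\<Sum>i<n. m i) * 1 \<le> norm (aa n \<nu> k m) * (1/2) ^ (\<Sum>i<n. m i) * (real (\<Sum>i<n. m i) + 1)^2"
        using o by (intro mult_left_mono) auto
      then show ?thesis by simp
    qed
    finally show ?thesis by (simp add: K_def mult_ac)
  qed
  define g where "g u = (\<Sum>\<^sub>\<infinity>m\<in>SS n. Tm n \<nu> k w m u)" for u
  have ex: "\<exists>g'. \<forall>u\<in>ball 1 (1/4). (g has_field_derivative g' u) (at u)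
        \<and> ((\<lambda>m. Dm n \<nu> k w m u) has_sum g' u) (SS n)"
    unfolding g_def
  proof (rule infsum_deriv[OF Ks])
    show "\<And>m t. m \<in> SS n \<Longrightarrow> t \<in> cball 1 (1/4) \<Longrightarrow> norm (Tm n \<nu> k w m t) \<le> K m"
      by (rule TK)
    show "\<And>m. m \<in> SS n \<Longrightarrow> 0 \<le> K m" by (rule Knn)
    show "\<And>m. m \<in> SS n \<Longrightarrow> continuous_on (cball 1 (1/4)) (Tm n \<nu> k w m)" by (rule Tm_cont)
    show "\<And>m u. m \<in> SS n \<Longrightarrow> u \<in> ball 1 (1/4) \<Longrightarrow> (Tm n \<nu> k w m has_field_derivative Dm n \<nu> k w m u) (at u)"
      by (rule Tm_deriv)
  qed simp
  then obtain g' where g': "\<And>u. u \<in> ball 1 (1/4) \<Longrightarrow> (g has_field_derivative g' u) (at u)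
        \<and> ((\<lambda>m. Dm n \<nu> k w m u) has_sum g' u) (SS n)" by blast
  have hT: "((\<lambda>m. Tm n \<nu> k w m u) has_sum g u) (SS n)" if "u \<in> cball 1 (1/4)" for u
  proof -
    have "(\<lambda>m. Tm n \<nu> k w m u) summable_on SS n"
      by (rule summable_by_bound[OF Ks]) (rule TK[OF that])
    then show ?thesis unfolding g_def by simp
  qed
  have ode: "u * g' u = \<nu> * g u" if u: "u \<in> ball 1 (1/4)" for u
    by (rule pde[OF nk]) (use bdc u g' hT in auto)
  define h where "h u = u powr (- \<nu>) * g u" for u
  have hd: "(h has_field_derivative 0) (at u within ball 1 (1/4))" if u: "u \<in> ball 1 (1/4)" for u
  proof -
    have Re: "Re u > 0"
    proof -
      have "\<bar>Re (1 - u)\<bar> \<le> norm (1 - u)" by (rule abs_Re_le_cmod)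
      also have "\<dots> < 1/4" using u by (simp add: dist_norm)
      finally have "\<bar>1 - Re u\<bar> < 1/4" by simp
      then show ?thesis by linarith
    qed
    then have u0: "u \<noteq> 0" by auto
    have nr: "u \<notin> \<real>\<^sub>\<le>\<^sub>0" using Re by (auto simp: complex_nonpos_Reals_iff)
    have d: "(h has_field_derivative ((- \<nu>) * u powr (- \<nu> - 1) * g u + g' u * u powr (- \<nu>))) (at u)"
      unfolding h_def by (rule DERIV_mult[OF has_field_derivative_powr[OF nr] conjunct1[OF g'[OF u]]])
    have p1: "u powr (- \<nu> - 1) = u powr (- \<nu>) * inverse u"
      using powr_add[of u "- \<nu>" "- 1"] powr_minus[of u 1] by simp
    have "(- \<nu>) * u powr (- \<nu> - 1) * g u + g' u * u powr (- \<nu>)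
        = u powr (- \<nu>) * inverse u * (u * g' u - \<nu> * g u)"
      unfolding p1 using u0 by (simp add: field_simps)
    also have "\<dots> = 0" using ode[OF u] by simp
    finally have "(h has_field_derivative 0) (at u)" using d by simp
    then show ?thesis by (rule has_field_derivative_at_within)
  qed
  obtain c where c: "\<And>u. u \<in> ball 1 (1/4) \<Longrightarrow> h u = c"
    using has_field_derivative_zero_constant[OF convex_ball hd] by blast
  have h1: "h 1 = g 1" by (simp add: h_def)
  have ht: "h t = g 1" using c[OF t] c[of 1] h1 by simp
  have t0: "t \<noteq> 0" using t by (auto simp: dist_norm)
  have "g t = t powr \<nu> * g 1"
  proof -
    have "t powr \<nu> * h t = (t powr \<nu> * t powr (- \<nu>)) * g t" by (simp add: h_def mult.assoc)
    also have "t powr \<nu> * t powr (- \<nu>) = 1" using powr_add[of t \<nu> "- \<nu>"] t0 by simp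
    finally show ?thesis using ht by simp
  qed
  then show ?thesis unfolding FD_aa g_def Tm_def w_def .
qed



lemma cpow_pos: "0 < a \<Longrightarrow> complex_of_real a powr w = exp (w * of_real (ln a))"
  by (simp add: powr_def Ln_of_real)

lemma phi_eq:
  fixes z :: "nat \<Rightarrow> real"
  assumes n: "n \<ge> 1" and nk: "\<forall>j::nat. of_nat n * k \<noteq> - of_nat j"
    and z: "\<And>i. i < n \<Longrightarrow> \<bar>z i - 1\<bar> < 1/8"
  shows "phi n \<nu> k z = complex_of_real (\<Prod>i<n. z i) powr (- \<nu> / of_nat n)
       * lauricella_FD n (-\<nu>) (\<lambda>_. k) (of_nat n * k) (\<lambda>i. 1 - 1 * of_real (z i))"
proof -
  define d where "d = n - 1"
  have nd: "n = Suc d" using n unfolding d_def by simp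
  define c where "c = z d"
  have zpos: "z i > 0" if "i < n" for i using z[OF that] by linarith
  have cz: "\<bar>c - 1\<bar> < 1/8" using z[of d] nd unfolding c_def by simp
  then have c: "c > 7/8" "c < 9/8" by linarith+
  define t where "t = complex_of_real (1 / c)"
  have tb: "t \<in> ball 1 (1/4)"
  proof -
    have "\<bar>1 - 1/c\<bar> = \<bar>c - 1\<bar> / c" using c by (simp add: field_simps abs_div)
    also have "\<dots> < 1/4"
    proof -
      have "\<bar>c - 1\<bar> < 1/4 * c" using c cz by linarith
      then show ?thesis using pos_divide_less_eq[of c "\<bar>c - 1\<bar>" "1/4"] c by simp
    qed
    finally have "\<bar>1 - 1/c\<bar> < 1/4" by simp
    moreover have e: "norm ((1::complex) - complex_of_real (1/c)) = \<bar>1 - 1/c\<bar>"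
    proof -
      have "(1::complex) - complex_of_real (1/c) = complex_of_real (1 - 1/c)" by simp
      then show ?thesis by (simp only: norm_of_real)
    qed
    ultimately show ?thesis unfolding t_def by (simp only: mem_ball dist_norm e)
  qed
  have FD1: "lauricella_FD (n-1) (-\<nu>) (\<lambda>_. k) (of_nat n * k) (\<lambda>i. complex_of_real (1 - z i / z (n-1)))
      = lauricella_FD n (-\<nu>) (\<lambda>_. k) (of_nat n * k) (\<lambda>i. 1 - t * of_real (z i))"
  proof -
    have "lauricella_FD (n-1) (-\<nu>) (\<lambda>_. k) (of_nat n * k) (\<lambda>i. complex_of_real (1 - z i / z (n-1)))
      = lauricella_FD n (-\<nu>) (\<lambda>_. k) (of_nat n * k) ((\<lambda>i. complex_of_real (1 - z i / z (n-1)))(d := 0))"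
      unfolding nd using FD_Suc[of d] by (simp add: d_def)
    also have "\<dots> = lauricella_FD n (-\<nu>) (\<lambda>_. k) (of_nat n * k) (\<lambda>i. 1 - t * of_real (z i))"
    proof (rule FD_cong)
      fix i assume i: "i < n"
      show "((\<lambda>i. complex_of_real (1 - z i / z (n-1)))(d := 0)) i = 1 - t * of_real (z i)"
      proof (cases "i = d")
        case True then show ?thesis using c by (simp add: t_def c_def)
      next
        case False then show ?thesis by (simp add: t_def c_def d_def)
      qed
    qed
    finally show ?thesis .
  qed
  have H: "lauricella_FD n (-\<nu>) (\<lambda>_. k) (of_nat n * k) (\<lambda>i. 1 - t * of_real (z i))
       = t powr \<nu> * lauricella_FD n (-\<nu>) (\<lambda>_. k) (of_nat n * k) (\<lambda>i. 1 - 1 * of_real (z i))"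
    by (rule homog[OF nk z tb])
  define S1 where "S1 = (\<Sum>i<d. ln (z i))"
  have zp': "z i > 0" if "i < d" for i using zpos[of i] that nd by simp
  have ln1: "ln (\<Prod>i<n-1. z i / z (n-1)) = S1 - real d * ln c"
  proof -
    have "ln (\<Prod>i<d. z i / c) = (\<Sum>i<d. ln (z i / c))"
    proof (rule ln_prod)
      fix i assume "i \<in> {..<d}"
      then show "z i / c \<noteq> 0" using zp'[of i] c by simp
    qed simp
    also have "\<dots> = (\<Sum>i<d. ln (z i) - ln c)"
    proof (rule sum.cong)
      fix i assume "i \<in> {..<d}"
      then show "ln (z i / c) = ln (z i) - ln c" using zp'[of i] c by (simp add: ln_div)
    qed simp
    finally show ?thesis by (simp add: S1_def sum_subtractf c_def d_def)
  qed
  have ln2: "ln (\<Prod>i<n. z i) = S1 + ln c"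
  proof -
    have "ln (\<Prod>i<n. z i) = (\<Sum>i<n. ln (z i))"
      using zpos by (intro ln_prod) (auto simp: less_imp_neq[symmetric] dest: zpos)
    then show ?thesis unfolding nd by (simp add: S1_def c_def)
  qed
  have pos1: "(\<Prod>i<n-1. z i / z (n-1)) > 0"
  proof (rule prod_pos)
    fix i assume "i \<in> {..<n-1}"
    then have "i < n" by auto
    then show "0 < z i / z (n-1)" using zpos[of i] zpos[of "n-1"] n by simp
  qed
  have pos2: "(\<Prod>i<n. z i) > 0" using zpos by (intro prod_pos) auto
  have tpow: "t powr \<nu> = exp (\<nu> * of_real (- ln c))"
  proof -
    have "t powr \<nu> = exp (\<nu> * of_real (ln (1/c)))" unfolding t_def using c by (intro cpow_pos) simp
    also have "ln (1/c) = - ln c" using c by (simp add: ln_div)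
    finally show ?thesis .
  qed
  have pref: "complex_of_real (\<Prod>i<n-1. z i / z (n-1)) powr (- \<nu> / of_nat n) * t powr \<nu>
      = complex_of_real (\<Prod>i<n. z i) powr (- \<nu> / of_nat n)"
  proof -
    have "complex_of_real (\<Prod>i<n-1. z i / z (n-1)) powr (- \<nu> / of_nat n) * t powr \<nu>
        = exp (- \<nu> / of_nat n * of_real (S1 - real d * ln c) + \<nu> * of_real (- ln c))"
      unfolding cpow_pos[OF pos1] ln1 tpow exp_add ..
    also have "- \<nu> / of_nat n * of_real (S1 - real d * ln c) + \<nu> * of_real (- ln c)
        = - \<nu> / of_nat n * of_real (S1 + ln c)"
    proof -
      have nz: "(1 + complex_of_nat d) \<noteq> 0" using of_nat_eq_0_iff[of "Suc d", where 'a=complex] by simp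
      show ?thesis unfolding nd using nz by (simp add: field_simps)
    qed
    also have "exp \<dots> = complex_of_real (\<Prod>i<n. z i) powr (- \<nu> / of_nat n)"
      unfolding cpow_pos[OF pos2] ln2 ..
    finally show ?thesis .
  qed
  show ?thesis
    unfolding phi_def FD1 H using pref by (simp add: mult.assoc[symmetric])
qed

theorem lemma2p1:
  fixes n :: nat and \<nu> k :: complex and \<sigma> :: "nat \<Rightarrow> nat"
  assumes "n \<ge> 2"
    and "\<forall>j::nat. of_nat n * k \<noteq> - of_nat j"
    and "\<sigma> permutes {..<n}"
  shows "\<exists>\<epsilon>>0. \<forall>z :: nat \<Rightarrow> real. (\<forall>i<n. \<bar>z i - 1\<bar> < \<epsilon>) \<longrightarrow>
           phi n \<nu> k (z \<circ> \<sigma>) = phi n \<nu> k z"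
proof (intro exI[of _ "1/8"] conjI allI impI)
  show "(0::real) < 1/8" by simp
  fix z :: "nat \<Rightarrow> real"
  assume z: "\<forall>i<n. \<bar>z i - 1\<bar> < 1/8"
  have n1: "n \<ge> 1" using assms(1) by simp
  have s: "\<sigma> permutes {..<n}" by (rule assms(3))
  have zs: "\<bar>(z \<circ> \<sigma>) i - 1\<bar> < 1/8" if "i < n" for i
  proof -
    have "\<sigma> i < n" using permutes_in_image[OF s, of i] that by simp
    then show ?thesis using z by simp
  qed
  have p: "(\<Prod>i<n. (z \<circ> \<sigma>) i) = (\<Prod>i<n. z i)"
    using prod.permute[OF s, of z] by simp
  have f: "lauricella_FD n (-\<nu>) (\<lambda>_. k) (of_nat n * k) (\<lambda>i. 1 - 1 * of_real ((z \<circ> \<sigma>) i))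
     = lauricella_FD n (-\<nu>) (\<lambda>_. k) (of_nat n * k) (\<lambda>i. 1 - 1 * of_real (z i))"
    using FD_perm[OF s, of "-\<nu>" k "of_nat n * k" "\<lambda>i. 1 - 1 * of_real (z i)"] by (simp add: o_def)
  have "phi n \<nu> k (z \<circ> \<sigma>) = complex_of_real (\<Prod>i<n. (z \<circ> \<sigma>) i) powr (- \<nu> / of_nat n)
       * lauricella_FD n (-\<nu>) (\<lambda>_. k) (of_nat n * k) (\<lambda>i. 1 - 1 * of_real ((z \<circ> \<sigma>) i))"
    by (rule phi_eq[OF n1 assms(2) zs])
  also have "\<dots> = complex_of_real (\<Prod>i<n. z i) powr (- \<nu> / of_nat n)
       * lauricella_FD n (-\<nu>) (\<lambda>_. k) (of_nat n * k) (\<lambda>i. 1 - 1 * of_real (z i))"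
    by (simp only: p f)
  also have "\<dots> = phi n \<nu> k z"
    by (rule phi_eq[symmetric]) (use n1 assms(2) z in auto)
  finally show "phi n \<nu> k (z \<circ> \<sigma>) = phi n \<nu> k z" .
qed

end
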